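(* Let $r\ge1$, $k_1,\dots,k_r\ge1$, $k=\sum k_\alpha$, and let $\Pi\in\mathrm{Part}_2(2k)$ satisfy $\#(\Pi_0\vee\Pi_1\vee\Pi)=1$ and $\#(\Pi_1\vee\Pi)=1$. Then, as $p\to\infty$, $$\sum_{\substack{\mathbf j:\ (p,2k)\text{-word},\\ \mathbf j\ \Pi_1\text{-measurable}}}(1-B(\mathbf j))C_\Pi(\mathbf j)=o(p).$$
   Context: Assumption A: $p$ positive integer, $b=b(p)>0$, $n=n(p)$ positive integer; as $p\to\infty$, $b\to\infty$, $n\to\infty$, $b/n\to0$, $b\le p$. $\{Z_j\}_{j\in\mathbb Z}$ is a stationary real sequence with all moments finite, $\mathbf EZ_0=0$, and $\sum_{j_1,\dots,j_r\in\mathbb Z}|\mathbf C(Z_0,Z_{j_1},\dots,Z_{j_r})|<\infty$ for all $r\ge1$, where $\mathbf C$ is the joint cumulant $\mathbf C(X_1,\dots,X_k)=i^{-k}\frac{\partial^k}{\partial t_1\cdots\partial t_k}\log\mathbf E\exp(\sum_j it_jX_j)|_{t=0}$. $\mathrm{Part}(m)$ is the set of set partitions of $\{1,\dots,m\}$; $\mathrm{Part}_2(m)$ those with all parts of size $\ge2$; $\Pi\vee\Sigma$ is the finest partition refined by both. With $K_0=0$, $K_\alpha=2\sum_{\beta\le\alpha}k_\beta$: $\Pi_0=\{\{2i-1,2i\}:i=1,\dots,k\}$, $\Pi_1=\bigcup_{\alpha=1}^r\big(\{\{K_{\alpha-1}+2\nu,K_{\alpha-1}+2\nu+1\}:1\le\nu\le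 k_\alpha-1\}\cup\{\{K_\alpha,K_{\alpha-1}+1\}\}\big)$. A $(p,2k)$-word is a function $\mathbf j:\{1,\dots,2k\}\to\{1,\dots,p\}$, $\Pi$-measurable if constant on parts of $\Pi$. $B(i,j)=1$ if $|i-j|\le b$ else $0$; $B(\mathbf j)=\prod_{\alpha=1}^kB(\mathbf j(2\alpha-1),\mathbf j(2\alpha))$; $C_\Pi(\mathbf j)=\prod_{A\in\Pi}\mathbf C(\{Z_{\mathbf j(i)}\}_{i\in A})$. *)

theory Defs
  imports "HOL-Probability.Probability" "HOL-Library.Landau_Symbols" "HOL-Library.Disjoint_Sets"
begin

definition char_fun :: "'a measure \<Rightarrow> ('a \<Rightarrow> real) list \<Rightarrow> (nat \<Rightarrow> real) \<Rightarrow> complex" where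
  "char_fun M Xs t = integral\<^sup>L M (\<lambda>x. cis (\<Sum>i<length Xs. t i * (Xs ! i) x))"

fun mpd :: "((nat \<Rightarrow> real) \<Rightarrow> complex) \<Rightarrow> nat list \<Rightarrow> (nat \<Rightarrow> real) \<Rightarrow> complex" where
  "mpd f [] t = f t"
| "mpd f (j # js) t = vector_derivative (\<lambda>s. mpd f js (t(j := s))) (at (t j))"

text \<open>C(X_1,...,X_k) = i^{-k} d^k/(dt_1...dt_k) log E exp(i sum t_j X_j) at t = 0
  (principal logarithm; the value is real, we take its real part).\<close>
definition cumulant :: "'a measure \<Rightarrow> ('a \<Rightarrow> real) list \<Rightarrow> real" where
  "cumulant M Xs = Re (inverse (\<i> ^ length Xs) *
      mpd (\<lambda>t. Ln (char_fun M Xs t)) [0..<length Xs] (\<lambda>_. 0))"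

definition Part :: "nat \<Rightarrow> nat set set set" where
  "Part m = {P. partition_on {1..m} P}"

definition Part2 :: "nat \<Rightarrow> nat set set set" where
  "Part2 m = {P \<in> Part m. \<forall>A\<in>P. 2 \<le> card A}"

text \<open>Join of two partitions of S: the finest partition refined by both, i.e. the
  classes of the equivalence relation generated by "lying in a common block".\<close>
definition part_join :: "nat set \<Rightarrow> nat set set \<Rightarrow> nat set set \<Rightarrow> nat set set" where
  "part_join S P Q = S // ({(x, y). \<exists>A \<in> P \<union> Q. x \<in> A \<and> y \<in> A}\<^sup>*)"

definition Kidx :: "nat list \<Rightarrow> nat \<Rightarrow> nat" where
  "Kidx ks a = 2 * sum_list (take a ks)"

definition Pi0 :: "nat list \<Rightarrow> nat set set" where
  "Pi0 ks = {{2 * i - 1, 2 * i} | i. 1 \<le> i \<and> i \<le> sum_list ks}"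

definition Pi1 :: "nat list \<Rightarrow> nat set set" where
  "Pi1 ks = (\<Union>\<alpha>\<in>{1..length ks}.
      {{Kidx ks (\<alpha> - 1) + 2 * \<nu>, Kidx ks (\<alpha> - 1) + 2 * \<nu> + 1} | \<nu>.
          1 \<le> \<nu> \<and> \<nu> \<le> ks ! (\<alpha> - 1) - 1}
      \<union> {{Kidx ks \<alpha>, Kidx ks (\<alpha> - 1) + 1}})"

definition words :: "nat \<Rightarrow> nat \<Rightarrow> (nat \<Rightarrow> nat) set" where
  "words p m = PiE {1..m} (\<lambda>_. {1..p})"

definition measurable_wrt :: "nat set set \<Rightarrow> (nat \<Rightarrow> nat) \<Rightarrow> bool" where
  "measurable_wrt P j \<longleftrightarrow> (\<forall>A\<in>P. \<forall>x\<in>A. \<forall>y\<in>A. j x = j y)"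

definition band :: "real \<Rightarrow> nat \<Rightarrow> nat \<Rightarrow> real" where
  "band b i j = (if \<bar>real i - real j\<bar> \<le> b then 1 else 0)"

definition Bword :: "real \<Rightarrow> nat \<Rightarrow> (nat \<Rightarrow> nat) \<Rightarrow> real" where
  "Bword b k j = (\<Prod>\<alpha>\<in>{1..k}. band b (j (2 * \<alpha> - 1)) (j (2 * \<alpha>)))"

definition CPi :: "'a measure \<Rightarrow> (int \<Rightarrow> 'a \<Rightarrow> real) \<Rightarrow> nat set set \<Rightarrow> (nat \<Rightarrow> nat) \<Rightarrow> real" where
  "CPi M Z P j = (\<Prod>A\<in>P. cumulant M (map (\<lambda>i. Z (int (j i))) (sorted_list_of_set A)))"

end

theory Submission
  imports Defs
begin


lemma char_fun_shift:
  fixes M :: "'a measure" and Z :: "int \<Rightarrow> 'a \<Rightarrow> real"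
  assumes meas: "\<And>j. Z j \<in> borel_measurable M"
    and st: "distr M (PiM {..<length ws} (\<lambda>_. borel)) (\<lambda>x. \<lambda>i\<in>{..<length ws}. Z (ws ! i + h) x)
         = distr M (PiM {..<length ws} (\<lambda>_. borel)) (\<lambda>x. \<lambda>i\<in>{..<length ws}. Z (ws ! i) x)"
  shows "char_fun M (map (\<lambda>w. Z (w + h)) ws) = char_fun M (map Z ws)"
proof
  fix t :: "nat \<Rightarrow> real"
  define n where "n = length ws"
  define \<Phi> where "\<Phi> = (\<lambda>y::nat\<Rightarrow>real. cis (\<Sum>i<n. t i * y i))"
  have m\<Phi>: "\<Phi> \<in> borel_measurable (PiM {..<n} (\<lambda>_. borel))"
  proof -
    have c: "cis \<in> borel_measurable borel"
      by (intro borel_measurable_continuous_onI continuous_intros)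
    have s: "(\<lambda>y::nat\<Rightarrow>real. \<Sum>i<n. t i * y i) \<in> borel_measurable (PiM {..<n} (\<lambda>_. borel))"
      by measurable
    show ?thesis unfolding \<Phi>_def using measurable_comp[OF s c] by (simp add: comp_def)
  qed
  have mV: "\<And>g. (\<lambda>x. \<lambda>i\<in>{..<n}. Z (g i) x) \<in> measurable M (PiM {..<n} (\<lambda>_. borel))"
    by (rule measurable_restrict) (simp add: meas)
  have "char_fun M (map (\<lambda>w. Z (w + h)) ws) t = integral\<^sup>L M (\<lambda>x. \<Phi> (\<lambda>i\<in>{..<n}. Z (ws ! i + h) x))"
    unfolding char_fun_def \<Phi>_def n_def by (intro Bochner_Integration.integral_cong) auto
  also have "\<dots> = integral\<^sup>L (distr M (PiM {..<n} (\<lambda>_. borel)) (\<lambda>x. \<lambda>i\<in>{..<n}. Z (ws ! i + h) x)) \<Phi>"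
    by (rule integral_distr[symmetric, OF mV m\<Phi>])
  also have "\<dots> = integral\<^sup>L (distr M (PiM {..<n} (\<lambda>_. borel)) (\<lambda>x. \<lambda>i\<in>{..<n}. Z (ws ! i) x)) \<Phi>"
    using st n_def by simp
  also have "\<dots> = integral\<^sup>L M (\<lambda>x. \<Phi> (\<lambda>i\<in>{..<n}. Z (ws ! i) x))"
    by (rule integral_distr[OF mV m\<Phi>])
  also have "\<dots> = char_fun M (map Z ws) t"
    unfolding char_fun_def \<Phi>_def n_def by (intro Bochner_Integration.integral_cong) auto
  finally show "char_fun M (map (\<lambda>w. Z (w + h)) ws) t = char_fun M (map Z ws) t" .
qed

lemma cumulant_shift:
  fixes M :: "'a measure" and Z :: "int \<Rightarrow> 'a \<Rightarrow> real"
  assumes meas: "\<And>j. Z j \<in> borel_measurable M"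
    and st: "distr M (PiM {..<length ws} (\<lambda>_. borel)) (\<lambda>x. \<lambda>i\<in>{..<length ws}. Z (ws ! i + h) x)
         = distr M (PiM {..<length ws} (\<lambda>_. borel)) (\<lambda>x. \<lambda>i\<in>{..<length ws}. Z (ws ! i) x)"
  shows "cumulant M (map (\<lambda>w. Z (w + h)) ws) = cumulant M (map Z ws)"
  unfolding cumulant_def using char_fun_shift[OF meas st] by simp




definition Cf :: "nat set \<Rightarrow> nat \<Rightarrow> (nat \<Rightarrow> nat) set" where
  "Cf W p = PiE W (\<lambda>_. {1..p})"

definition RS :: "nat set \<Rightarrow> ((nat \<Rightarrow> nat) \<Rightarrow> real) \<Rightarrow> ((nat \<Rightarrow> nat) \<Rightarrow> bool) \<Rightarrow> real \<Rightarrow> bool" where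
  "RS W F P K \<longleftrightarrow> 0 \<le> K \<and> (\<forall>p c r. r \<in> W \<longrightarrow> (\<Sum>j\<in>{j\<in>Cf W p. j r = c \<and> P j}. F j) \<le> K)"

definition far :: "nat set \<Rightarrow> real \<Rightarrow> (nat \<Rightarrow> nat) \<Rightarrow> bool" where
  "far W b j \<longleftrightarrow> (\<exists>x\<in>W. \<exists>y\<in>W. b < \<bar>real (j x) - real (j y)\<bar>)"

lemma finite_Cf: "finite W \<Longrightarrow> finite (Cf W p)"
  unfolding Cf_def by (intro finite_PiE) auto

lemma RSD: "RS W F P K \<Longrightarrow> r \<in> W \<Longrightarrow> (\<Sum>j\<in>{j\<in>Cf W p. j r = c \<and> P j}. F j) \<le> K"
  unfolding RS_def by blast

lemma glue_half:
  assumes fin: "finite W" "finite A" and u: "u \<in> W" "u \<in> A"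
    and Fnn: "\<And>j. 0 \<le> F j" and Gnn: "\<And>j. 0 \<le> G j"
    and R1: "RS W F P K1" and R2: "RS A G Q K2" and r: "r \<in> W"
  shows "(\<Sum>j\<in>{j\<in>Cf (W \<union> A) p. j r = c \<and> P (restrict j W) \<and> Q (restrict j A)}.
            F (restrict j W) * G (restrict j A)) \<le> K1 * K2"
proof -
  define T where "T = {j\<in>Cf (W \<union> A) p. j r = c \<and> P (restrict j W) \<and> Q (restrict j A)}"
  define T1 where "T1 = {j1\<in>Cf W p. j1 r = c \<and> P j1}"
  have finT: "finite T" unfolding T_def using finite_Cf[of "W \<union> A" p] fin by auto
  have finT1: "finite T1" unfolding T1_def using finite_Cf[of W p] fin by auto
  have img: "(\<lambda>j. restrict j W) ` T \<subseteq> T1"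
    unfolding T_def T1_def Cf_def using r by (auto simp: PiE_def Pi_def)
  have K2: "0 \<le> K2" using R2 unfolding RS_def by simp
  have inner: "(\<Sum>j\<in>{j \<in> T. restrict j W = j1}. G (restrict j A)) \<le> K2" if j1: "j1 \<in> T1" for j1
  proof -
    let ?T' = "{j \<in> T. restrict j W = j1}"
    have inj: "inj_on (\<lambda>j. restrict j A) ?T'"
    proof (rule inj_onI)
      fix x y assume x: "x \<in> ?T'" and y: "y \<in> ?T'" and e: "restrict x A = restrict y A"
      show "x = y"
      proof
        fix z
        show "x z = y z"
        proof (cases "z \<in> W")
          case True then show ?thesis using x y by (metis (mono_tags, lifting) mem_Collect_eq restrict_apply')
        next
          case False
          show ?thesis
          proof (cases "z \<in> A")
            case True then show ?thesis using e by (metis restrict_apply')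
          next
            case False
            then show ?thesis using x y \<open>z \<notin> W\<close> unfolding T_def Cf_def by (auto simp: PiE_def extensional_def)
          qed
        qed
      qed
    qed
    have sub: "(\<lambda>j. restrict j A) ` ?T' \<subseteq> {j'\<in>Cf A p. j' u = j1 u \<and> Q j'}"
    proof
      fix y assume "y \<in> (\<lambda>j. restrict j A) ` ?T'"
      then obtain j where j: "j \<in> ?T'" and y: "y = restrict j A" by blast
      have "j u = j1 u" using j u by auto
      then show "y \<in> {j'\<in>Cf A p. j' u = j1 u \<and> Q j'}"
        using j u y unfolding T_def Cf_def by (auto simp: PiE_def Pi_def)
    qed
    have "(\<Sum>j\<in>?T'. G (restrict j A)) = (\<Sum>y\<in>(\<lambda>j. restrict j A) ` ?T'. G y)"
      by (rule sum.reindex[OF inj, symmetric, unfolded comp_def])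
    also have "\<dots> \<le> (\<Sum>y\<in>{j'\<in>Cf A p. j' u = j1 u \<and> Q j'}. G y)"
      by (rule sum_mono2) (use finite_Cf[of A p] fin sub Gnn in auto)
    also have "\<dots> \<le> K2" using RSD[OF R2 u(2)] .
    finally show ?thesis .
  qed
  have "(\<Sum>j\<in>T. F (restrict j W) * G (restrict j A))
      = (\<Sum>j1\<in>T1. \<Sum>j\<in>{j \<in> T. restrict j W = j1}. F (restrict j W) * G (restrict j A))"
    by (rule sum.group[OF finT finT1 img, symmetric])
  also have "\<dots> = (\<Sum>j1\<in>T1. F j1 * (\<Sum>j\<in>{j \<in> T. restrict j W = j1}. G (restrict j A)))"
    by (intro sum.cong refl) (auto simp: sum_distrib_left)
  also have "\<dots> \<le> (\<Sum>j1\<in>T1. F j1 * K2)"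
    by (intro sum_mono mult_left_mono inner Fnn)
  also have "\<dots> = (\<Sum>j1\<in>T1. F j1) * K2" by (simp add: sum_distrib_right)
  also have "\<dots> \<le> K1 * K2"
    using RSD[OF R1 r, of p c] K2 unfolding T1_def by (intro mult_right_mono) auto
  finally show ?thesis unfolding T_def .
qed

lemma glue:
  assumes fin: "finite W" "finite A" and u: "u \<in> W" "u \<in> A"
    and Fnn: "\<And>j. 0 \<le> F j" and Gnn: "\<And>j. 0 \<le> G j"
    and R1: "RS W F P K1" and R2: "RS A G Q K2"
  shows "RS (W \<union> A) (\<lambda>j. F (restrict j W) * G (restrict j A))
            (\<lambda>j. P (restrict j W) \<and> Q (restrict j A)) (K1 * K2)"
  unfolding RS_def
proof (intro conjI allI impI)
  show "0 \<le> K1 * K2" using R1 R2 unfolding RS_def by simp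
  fix p c r assume r: "r \<in> W \<union> A"
  show "(\<Sum>j\<in>{j\<in>Cf (W \<union> A) p. j r = c \<and> P (restrict j W) \<and> Q (restrict j A)}.
            F (restrict j W) * G (restrict j A)) \<le> K1 * K2"
  proof (cases "r \<in> W")
    case True then show ?thesis using glue_half[OF fin u Fnn Gnn R1 R2] by blast
  next
    case False
    then have rA: "r \<in> A" using r by auto
    have "(\<Sum>j\<in>{j\<in>Cf (A \<union> W) p. j r = c \<and> Q (restrict j A) \<and> P (restrict j W)}.
            G (restrict j A) * F (restrict j W)) \<le> K2 * K1"
      using glue_half[OF fin(2,1) u(2,1) Gnn Fnn R2 R1 rA] by blast
    then show ?thesis by (simp add: Un_commute conj_commute mult.commute)
  qed
qed

lemma RS_mono_pred:
  assumes "RS W F P K" "\<And>j. Q j \<Longrightarrow> P j" "\<And>j. 0 \<le> F j" "finite W"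
  shows "RS W F Q K"
  unfolding RS_def
proof (intro conjI allI impI)
  show "0 \<le> K" using assms(1) unfolding RS_def by simp
  fix p c r assume r: "r \<in> W"
  have "(\<Sum>j\<in>{j\<in>Cf W p. j r = c \<and> Q j}. F j) \<le> (\<Sum>j\<in>{j\<in>Cf W p. j r = c \<and> P j}. F j)"
    by (rule sum_mono2) (use finite_Cf[OF assms(4)] assms(2,3) in auto)
  also have "\<dots> \<le> K" using RSD[OF assms(1) r] .
  finally show "(\<Sum>j\<in>{j\<in>Cf W p. j r = c \<and> Q j}. F j) \<le> K" .
qed

lemma RS_mono_K: "RS W F P K \<Longrightarrow> K \<le> K' \<Longrightarrow> RS W F P K'"
  unfolding RS_def by (meson order_trans)

lemma glue_tail:
  assumes fin: "finite W" "finite A" and u: "u \<in> W" "u \<in> A"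
    and Fnn: "\<And>j. 0 \<le> F j" and Gnn: "\<And>j. 0 \<le> G j"
    and R1: "RS W F (\<lambda>_. True) K1" and R2: "RS A G (\<lambda>_. True) K2"
    and T1: "\<forall>\<epsilon>>0. \<exists>B. \<forall>b\<ge>B. RS W F (far W b) \<epsilon>"
    and T2: "\<forall>\<epsilon>>0. \<exists>B. \<forall>b\<ge>B. RS A G (far A b) \<epsilon>"
  shows "\<forall>\<epsilon>>0. \<exists>B. \<forall>b\<ge>B. RS (W \<union> A) (\<lambda>j. F (restrict j W) * G (restrict j A)) (far (W \<union> A) b) \<epsilon>"
proof (intro allI impI)
  fix \<epsilon> :: real assume e: "\<epsilon> > 0"
  have K1: "0 \<le> K1" and K2: "0 \<le> K2" using R1 R2 unfolding RS_def by auto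
  define e1 where "e1 = \<epsilon> / (2 * (K2 + 1))"
  define e2 where "e2 = \<epsilon> / (2 * (K1 + 1))"
  have e1: "e1 > 0" and e2: "e2 > 0" using e K1 K2 unfolding e1_def e2_def by auto
  obtain B1 where B1: "\<And>b. b \<ge> B1 \<Longrightarrow> RS W F (far W b) e1" using T1 e1 by blast
  obtain B2 where B2: "\<And>b. b \<ge> B2 \<Longrightarrow> RS A G (far A b) e2" using T2 e2 by blast
  have le1: "e1 * K2 \<le> \<epsilon> / 2"
  proof -
    have "e1 * K2 = \<epsilon> / 2 * (K2 / (K2 + 1))" unfolding e1_def using K2 by (simp add: field_simps)
    also have "\<dots> \<le> \<epsilon> / 2 * 1" using K2 e by (intro mult_left_mono) auto
    finally show ?thesis by simp
  qed
  have le2: "K1 * e2 \<le> \<epsilon> / 2"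
  proof -
    have "K1 * e2 = \<epsilon> / 2 * (K1 / (K1 + 1))" unfolding e2_def using K1 by (simp add: field_simps)
    also have "\<dots> \<le> \<epsilon> / 2 * 1" using K1 e by (intro mult_left_mono) auto
    finally show ?thesis by simp
  qed
  show "\<exists>B. \<forall>b\<ge>B. RS (W \<union> A) (\<lambda>j. F (restrict j W) * G (restrict j A)) (far (W \<union> A) b) \<epsilon>"
  proof (intro exI allI impI)
    fix b assume b: "2 * max B1 B2 \<le> b"
    have g1: "RS (W \<union> A) (\<lambda>j. F (restrict j W) * G (restrict j A))
            (\<lambda>j. far W (b/2) (restrict j W) \<and> True) (e1 * K2)"
      by (rule glue[OF fin u Fnn Gnn B1 R2]) (use b in auto)
    have g2: "RS (W \<union> A) (\<lambda>j. F (restrict j W) * G (restrict j A))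
            (\<lambda>j. True \<and> far A (b/2) (restrict j A)) (K1 * e2)"
      by (rule glue[OF fin u Fnn Gnn R1 B2]) (use b in auto)
    let ?H = "\<lambda>j. F (restrict j W) * G (restrict j A)"
    have Hnn: "\<And>j. 0 \<le> ?H j" using Fnn Gnn by (simp add: mult_nonneg_nonneg)
    show "RS (W \<union> A) ?H (far (W \<union> A) b) \<epsilon>"
      unfolding RS_def
    proof (intro conjI allI impI)
      show "0 \<le> \<epsilon>" using e by simp
      fix p c r assume r: "r \<in> W \<union> A"
      let ?S = "{j\<in>Cf (W \<union> A) p. j r = c \<and> far (W \<union> A) b j}"
      let ?S1 = "{j\<in>Cf (W \<union> A) p. j r = c \<and> (far W (b/2) (restrict j W) \<and> True)}"
      let ?S2 = "{j\<in>Cf (W \<union> A) p. j r = c \<and> (True \<and> far A (b/2) (restrict j A))}"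
      have sub: "?S \<subseteq> ?S1 \<union> ?S2"
      proof
        fix j assume j: "j \<in> ?S"
        show "j \<in> ?S1 \<union> ?S2"
        proof (rule ccontr)
          assume "j \<notin> ?S1 \<union> ?S2"
          then have nW: "\<And>x y. x \<in> W \<Longrightarrow> y \<in> W \<Longrightarrow> \<bar>real (j x) - real (j y)\<bar> \<le> b/2"
            and nA: "\<And>x y. x \<in> A \<Longrightarrow> y \<in> A \<Longrightarrow> \<bar>real (j x) - real (j y)\<bar> \<le> b/2"
            using j unfolding far_def by (fastforce simp: not_less)+
          from j obtain x y where xy: "x \<in> W \<union> A" "y \<in> W \<union> A" "b < \<bar>real (j x) - real (j y)\<bar>"
            unfolding far_def by auto
          have dx: "\<bar>real (j x) - real (j u)\<bar> \<le> b/2" using xy(1) nW nA u by blast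
          have dy: "\<bar>real (j u) - real (j y)\<bar> \<le> b/2" using xy(2) nW nA u by blast
          have bb: "b/2 \<le> b" using nW[OF u(1) u(1)] by simp
          have "\<bar>real (j x) - real (j y)\<bar> \<le> b"
          proof (cases "x \<in> W \<and> y \<in> W \<or> x \<in> A \<and> y \<in> A")
            case True then show ?thesis using nW nA bb by (meson order_trans)
          next
            case False then show ?thesis using dx dy by linarith
          qed
          then show False using xy by simp
        qed
      qed
      have fin': "finite (Cf (W \<union> A) p)" using finite_Cf fin by blast
      have "(\<Sum>j\<in>?S. ?H j) \<le> (\<Sum>j\<in>?S1 \<union> ?S2. ?H j)"
        by (rule sum_mono2) (use sub Hnn fin' in auto)
      also have "\<dots> \<le> (\<Sum>j\<in>?S1. ?H j) + (\<Sum>j\<in>?S2. ?H j)"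
      proof -
        have f1: "finite ?S1" "finite ?S2" using fin' by auto
        have "(\<Sum>j\<in>?S1 \<union> ?S2. ?H j) = (\<Sum>j\<in>?S1. ?H j) + (\<Sum>j\<in>?S2. ?H j) - (\<Sum>j\<in>?S1 \<inter> ?S2. ?H j)"
          by (rule sum_Un[OF f1])
        moreover have "0 \<le> (\<Sum>j\<in>?S1 \<inter> ?S2. ?H j)" by (intro sum_nonneg Hnn)
        ultimately show ?thesis by linarith
      qed
      also have "\<dots> \<le> e1 * K2 + K1 * e2"
        using RSD[OF g1 r, of p c] RSD[OF g2 r, of p c] by linarith
      also have "\<dots> \<le> \<epsilon>" using le1 le2 by linarith
      finally show "(\<Sum>j\<in>?S. ?H j) \<le> \<epsilon>" .
    qed
  qed
qed




inductive built :: "nat set set \<Rightarrow> nat set \<Rightarrow> nat set set \<Rightarrow> bool" for E where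
  base: "A \<in> E \<Longrightarrow> A \<noteq> {} \<Longrightarrow> built E A {A}"
| step: "built E W D \<Longrightarrow> A \<in> E \<Longrightarrow> A \<inter> W \<noteq> {} \<Longrightarrow> built E (W \<union> A) (insert A D)"

lemma built_inv: "built E W D \<Longrightarrow> D \<subseteq> E \<and> W = \<Union>D \<and> W \<noteq> {}"
  by (induction rule: built.induct) auto

lemma RS_cong:
  assumes "\<And>j. j \<in> extensional W \<Longrightarrow> F j = F' j" "RS W F P K"
  shows "RS W F' P K"
proof -
  have "\<And>p c r. (\<Sum>j\<in>{j\<in>Cf W p. j r = c \<and> P j}. F j) = (\<Sum>j\<in>{j\<in>Cf W p. j r = c \<and> P j}. F' j)"
    by (intro sum.cong refl assms(1)) (auto simp: Cf_def PiE_def)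
  then show ?thesis using assms(2) unfolding RS_def by simp
qed

lemma built_bound:
  assumes finE: "\<And>A. A \<in> E \<Longrightarrow> finite A"
    and gnn: "\<And>A j. 0 \<le> g A j"
    and HK: "\<And>A. A \<in> E \<Longrightarrow> \<exists>K. RS A (g A) (\<lambda>_. True) K"
    and HT: "\<And>A. A \<in> E \<Longrightarrow> \<forall>\<epsilon>>0. \<exists>B. \<forall>b\<ge>B. RS A (g A) (far A b) \<epsilon>"
    and bt: "built E W D"
  shows "(\<exists>K. RS W (\<lambda>j. \<Prod>A\<in>D. g A (restrict j A)) (\<lambda>_. True) K) \<and>
         (\<forall>\<epsilon>>0. \<exists>B. \<forall>b\<ge>B. RS W (\<lambda>j. \<Prod>A\<in>D. g A (restrict j A)) (far W b) \<epsilon>)"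
  using bt
proof (induction rule: built.induct)
  case (base A)
  have e: "\<And>j. j \<in> extensional A \<Longrightarrow> g A j = (\<Prod>A'\<in>{A}. g A' (restrict j A'))"
    by (simp add: extensional_restrict)
  show ?case
  proof
    from HK[OF base(1)] obtain K where "RS A (g A) (\<lambda>_. True) K" by blast
    then show "\<exists>K. RS A (\<lambda>j. \<Prod>A\<in>{A}. g A (restrict j A)) (\<lambda>_. True) K"
      using RS_cong[of A "g A" "\<lambda>j. \<Prod>A\<in>{A}. g A (restrict j A)", OF e] by blast
    show "\<forall>\<epsilon>>0. \<exists>B. \<forall>b\<ge>B. RS A (\<lambda>j. \<Prod>A\<in>{A}. g A (restrict j A)) (far A b) \<epsilon>"
      using HT[OF base(1)] RS_cong[of A "g A" "\<lambda>j. \<Prod>A\<in>{A}. g A (restrict j A)", OF e] by meson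
  qed
next
  case (step W D A)
  have inv: "D \<subseteq> E" "W = \<Union>D" "W \<noteq> {}" using built_inv[OF step(1)] by auto
  have finW: "finite W"
      using built.induct[OF step(1), of "\<lambda>W D. finite W"] finE by auto
  have finD: "finite D" using finW inv(2) finite_UnionD by blast
  show ?case
  proof (cases "A \<in> D")
    case True
    then have "W \<union> A = W" "insert A D = D" using inv by auto
    then show ?thesis using step.IH by simp
  next
    case False
    define F where "F = (\<lambda>j. \<Prod>A\<in>D. g A (restrict j A))"
    have Fnn: "\<And>j. 0 \<le> F j" unfolding F_def by (intro prod_nonneg gnn)
    have eq: "(\<lambda>j. \<Prod>A'\<in>insert A D. g A' (restrict j A')) = (\<lambda>j. F (restrict j W) * g A (restrict j A))"
    proof
      fix j
      have "(\<Prod>A'\<in>D. g A' (restrict (restrict j W) A')) = (\<Prod>A'\<in>D. g A' (restrict j A'))"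
      proof (intro prod.cong refl)
        fix A' assume "A' \<in> D"
        then have "W \<inter> A' = A'" using inv by auto
        then show "g A' (restrict (restrict j W) A') = g A' (restrict j A')" by simp
      qed
      then show "(\<Prod>A'\<in>insert A D. g A' (restrict j A')) = F (restrict j W) * g A (restrict j A)"
        unfolding F_def using False finD by (simp add: mult.commute)
    qed
    obtain u where u: "u \<in> W" "u \<in> A" using step(3) by blast
    obtain K1 where K1: "RS W F (\<lambda>_. True) K1" using step.IH unfolding F_def by blast
    obtain K2 where K2: "RS A (g A) (\<lambda>_. True) K2" using HK[OF step(2)] by blast
    have T1: "\<forall>\<epsilon>>0. \<exists>B. \<forall>b\<ge>B. RS W F (far W b) \<epsilon>" using step.IH unfolding F_def by blast
    have g1: "RS (W \<union> A) (\<lambda>j. F (restrict j W) * g A (restrict j A)) (\<lambda>j. True \<and> True) (K1 * K2)"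
      by (rule glue[OF finW finE[OF step(2)] u Fnn gnn K1 K2])
    have g2: "\<forall>\<epsilon>>0. \<exists>B. \<forall>b\<ge>B. RS (W \<union> A) (\<lambda>j. F (restrict j W) * g A (restrict j A)) (far (W \<union> A) b) \<epsilon>"
      by (rule glue_tail[OF finW finE[OF step(2)] u Fnn gnn K1 K2 T1 HT[OF step(2)]])
    show ?thesis unfolding eq using g1 g2 by auto
  qed
qed

lemma built_add:
  assumes "built E W D" "finite D'" "D' \<subseteq> E" "\<forall>A\<in>D'. A \<noteq> {} \<and> A \<subseteq> W"
  shows "built E W (D \<union> D')"
  using assms(2,3,4)
proof (induction D' rule: finite_induct)
  case empty then show ?case using assms(1) by simp
next
  case (insert A D')
  then have b: "built E W (D \<union> D')" by auto
  have "built E (W \<union> A) (insert A (D \<union> D'))"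
    by (rule built.step[OF b]) (use insert in auto)
  moreover have "W \<union> A = W" using insert by auto
  ultimately show ?case by simp
qed

lemma connected_built:
  assumes finS: "finite S" and ne: "S \<noteq> {}" and finE: "finite E"
    and sub: "\<forall>A\<in>E. A \<noteq> {} \<and> A \<subseteq> S"
    and cov: "\<forall>x\<in>S. \<exists>A\<in>E. x \<in> A"
    and conn: "\<forall>x\<in>S. \<forall>y\<in>S. (x, y) \<in> {(x, y). \<exists>A\<in>E. x \<in> A \<and> y \<in> A}\<^sup>*"
  shows "built E S E"
proof -
  have bsub: "built E W D \<Longrightarrow> W \<subseteq> S" for W D
    by (induction rule: built.induct) (use sub in auto)
  obtain x0 where x0: "x0 \<in> S" using ne by blast
  obtain A0 where A0: "A0 \<in> E" "x0 \<in> A0" using cov x0 by blast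
  have ex: "built E A0 {A0}" using A0 sub by (intro built.base) auto
  have "\<exists>WD. built E (fst WD) (snd WD) \<and>
      (\<forall>y. built E (fst y) (snd y) \<longrightarrow> card (fst y) \<le> card (fst WD))"
  proof (rule Lattices_Big.ex_has_greatest_nat[where f = "\<lambda>WD. card (fst WD)" and b = "Suc (card S)"])
    show "built E (fst (A0, {A0})) (snd (A0, {A0}))" using ex by simp
    show "\<forall>y. built E (fst y) (snd y) \<longrightarrow> card (fst y) < Suc (card S)"
      using bsub finS by (auto simp: less_Suc_eq_le intro: card_mono)
  qed
  then obtain W D where bWD: "built E W D" and mx: "\<And>W' D'. built E W' D' \<Longrightarrow> card W' \<le> card W"
    by force
  have WS: "W \<subseteq> S" using bsub[OF bWD] .
  have nocross: "\<not> (A \<inter> W \<noteq> {} \<and> \<not> A \<subseteq> W)" if A: "A \<in> E" for A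
  proof
    assume c: "A \<inter> W \<noteq> {} \<and> \<not> A \<subseteq> W"
    have "built E (W \<union> A) (insert A D)" by (rule built.step[OF bWD A]) (use c in auto)
    then have "card (W \<union> A) \<le> card W" by (rule mx)
    moreover have "card W < card (W \<union> A)"
      using c A sub finS WS by (intro psubset_card_mono) (auto intro: finite_subset)
    ultimately show False by simp
  qed
  have WeqS: "W = S"
  proof (rule ccontr)
    assume "W \<noteq> S"
    then obtain y where y: "y \<in> S" "y \<notin> W" using WS by blast
    obtain x where x: "x \<in> W" using built_inv[OF bWD] by blast
    have "(x, y) \<in> {(x, y). \<exists>A\<in>E. x \<in> A \<and> y \<in> A}\<^sup>*" using conn x y WS by blast
    then have "y \<in> W"
    proof (induction rule: rtrancl_induct)
      case base then show ?case using x .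
    next
      case (step y' z)
      then obtain A where A: "A \<in> E" "y' \<in> A" "z \<in> A" by blast
      then show ?case using nocross[OF A(1)] step.IH by blast
    qed
    then show False using y by simp
  qed
  have "built E S (D \<union> E)"
    by (rule built_add[OF bWD[unfolded WeqS] finE subset_refl]) (use sub in auto)
  moreover have "D \<union> E = E" using built_inv[OF bWD] by auto
  ultimately show ?thesis by simp
qed





definition ind :: "nat set \<Rightarrow> (nat \<Rightarrow> nat) \<Rightarrow> real" where
  "ind B j = (if \<forall>x\<in>B. \<forall>y\<in>B. j x = j y then 1 else 0)"

lemma ind_RS:
  assumes "finite B"
  shows "RS B (ind B) P 1"
  unfolding RS_def
proof (intro conjI allI impI)
  fix p c r assume r: "r \<in> B"
  let ?S = "{j\<in>Cf B p. j r = c \<and> P j}"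
  let ?x0 = "restrict (\<lambda>_. c) B"
  have "(\<Sum>j\<in>?S. ind B j) \<le> (\<Sum>j\<in>?S. if j = ?x0 then 1 else 0)"
  proof (intro sum_mono)
    fix j assume j: "j \<in> ?S"
    show "ind B j \<le> (if j = ?x0 then 1 else 0)"
    proof (cases "\<forall>x\<in>B. \<forall>y\<in>B. j x = j y")
      case True
      have jE: "j \<in> extensional B" using j by (simp add: Cf_def PiE_def)
      have "j = ?x0"
      proof
        fix x show "j x = ?x0 x"
        proof (cases "x \<in> B")
          case True
          then have "j x = j r" using \<open>\<forall>x\<in>B. \<forall>y\<in>B. j x = j y\<close> r by blast
          then show ?thesis using True j by simp
        next
          case False
          then show ?thesis using jE by (simp add: extensional_def)
        qed
      qed
      then show ?thesis by (simp add: ind_def)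
    qed (auto simp: ind_def)
  qed
  also have "\<dots> \<le> 1"
  proof -
    have "(\<Sum>j\<in>?S. if j = ?x0 then 1 else 0) = (if ?x0 \<in> ?S then 1 else (0::real))"
      by (rule sum.delta[OF finite_subset[OF _ finite_Cf[OF assms, of p]]]) auto
    then show ?thesis by simp
  qed
  finally show "(\<Sum>j\<in>?S. ind B j) \<le> 1" .
qed simp

lemma ind_tail:
  assumes "finite B"
  shows "\<forall>\<epsilon>>0. \<exists>b0. \<forall>b\<ge>b0. RS B (ind B) (far B b) \<epsilon>"
proof (intro allI impI exI)
  fix \<epsilon> :: real and b :: real assume e: "\<epsilon> > 0" and b: "0 \<le> b"
  show "RS B (ind B) (far B b) \<epsilon>"
    unfolding RS_def
  proof (intro conjI allI impI)
    fix p c r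
    have "(\<Sum>j\<in>{j\<in>Cf B p. j r = c \<and> far B b j}. ind B j) = 0"
    proof (intro sum.neutral ballI)
      fix j assume "j \<in> {j\<in>Cf B p. j r = c \<and> far B b j}"
      then obtain x y where xy: "x \<in> B" "y \<in> B" "b < \<bar>real (j x) - real (j y)\<bar>"
        unfolding far_def by blast
      then have "j x \<noteq> j y" using b by auto
      then show "ind B j = 0" using xy unfolding ind_def by auto
    qed
    then show "(\<Sum>j\<in>{j\<in>Cf B p. j r = c \<and> far B b j}. ind B j) \<le> \<epsilon>" using e by simp
  qed (use e in simp)
qed


lemma summable_tail:
  fixes f :: "'a \<Rightarrow> real"
  assumes "f summable_on X" "\<And>x. x \<in> X \<Longrightarrow> 0 \<le> f x" "\<epsilon> > 0"
  shows "\<exists>F0. finite F0 \<and> F0 \<subseteq> X \<and> (\<forall>F. finite F \<and> F \<subseteq> X - F0 \<longrightarrow> sum f F \<le> \<epsilon>)"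
proof -
  obtain F0 where F0: "finite F0" "F0 \<subseteq> X" "dist (sum f F0) (infsum f X) \<le> \<epsilon>"
    using has_sum_finite_approximation[OF has_sum_infsum[OF assms(1)] assms(3)] by blast
  show ?thesis
  proof (intro exI conjI allI impI)
    fix F assume F: "finite F \<and> F \<subseteq> X - F0"
    have "sum f (F \<union> F0) \<le> infsum f X"
      by (rule finite_sum_le_infsum[OF assms(1)]) (use F F0 assms(2) in auto)
    moreover have "sum f (F \<union> F0) = sum f F + sum f F0"
      by (rule sum.union_disjoint) (use F F0 in auto)
    ultimately show "sum f F \<le> \<epsilon>" using F0(3) by (simp add: dist_real_def)
  qed (use F0 in auto)
qed

definition dl :: "nat list \<Rightarrow> (nat \<Rightarrow> nat) \<Rightarrow> int list" where
  "dl L j = map (\<lambda>i. int (j i) - int (j (hd L))) (tl L)"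

lemma dl_inj:
  assumes A: "set L = A" "L \<noteq> []" and r: "r \<in> A"
  shows "inj_on (dl L) {j\<in>Cf A p. j r = c \<and> P j}"
proof (rule inj_onI)
  fix j j' assume j: "j \<in> {j\<in>Cf A p. j r = c \<and> P j}" and j': "j' \<in> {j\<in>Cf A p. j r = c \<and> P j}"
    and e: "dl L j = dl L j'"
  have d: "int (j i) - int (j (hd L)) = int (j' i) - int (j' (hd L))" if i: "i \<in> set (tl L)" for i
  proof -
    obtain k where k: "k < length (tl L)" "tl L ! k = i" using i by (auto simp: in_set_conv_nth)
    have "dl L j ! k = dl L j' ! k" using e by simp
    then show ?thesis using k unfolding dl_def by simp
  qed
  have L: "L = hd L # tl L" using A(2) by simp
  have setL: "A = insert (hd L) (set (tl L))"
  proof -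
    have "set L = insert (hd L) (set (tl L))" using A(2) by (cases L) auto
    then show ?thesis using A(1) by simp
  qed
  have h: "j (hd L) = j' (hd L)"
  proof (cases "r = hd L")
    case True then show ?thesis using j j' by simp
  next
    case False
    then have "r \<in> set (tl L)" using r setL by auto
    from d[OF this] show ?thesis using j j' by simp
  qed
  show "j = j'"
  proof
    fix x show "j x = j' x"
    proof (cases "x \<in> A")
      case True
      then show ?thesis
      proof (cases "x = hd L")
        case False
        then have "x \<in> set (tl L)" using True setL by auto
        from d[OF this] h show ?thesis by simp
      qed (use h in simp)
    next
      case False
      have "j \<in> extensional A" "j' \<in> extensional A" using j j' by (simp_all add: Cf_def PiE_def)
      then show ?thesis using False by (simp add: extensional_def)
    qed
  qed
qed

lemma dl_len: "length (dl L j) = length L - 1"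
  unfolding dl_def by simp

lemma cum_RS:
  fixes f :: "int list \<Rightarrow> real"
  assumes A: "set L = A" "L \<noteq> []" "finite A"
    and G: "\<And>j. G j = f (dl L j)" and fnn: "\<And>xs. 0 \<le> f xs"
    and sm: "f summable_on {xs. length xs = length L - 1}"
  shows "RS A G P (infsum f {xs. length xs = length L - 1})"
  unfolding RS_def
proof (intro conjI allI impI)
  show "0 \<le> infsum f {xs. length xs = length L - 1}" by (intro infsum_nonneg fnn)
  fix p c r assume r: "r \<in> A"
  let ?S = "{j\<in>Cf A p. j r = c \<and> P j}"
  have fin: "finite ?S" using finite_Cf[OF A(3)] by auto
  have "(\<Sum>j\<in>?S. G j) = (\<Sum>j\<in>?S. f (dl L j))" by (intro sum.cong refl G)
  also have "\<dots> = sum f (dl L ` ?S)"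
    by (rule sum.reindex[OF dl_inj[OF A(1,2) r], symmetric, unfolded comp_def])
  also have "\<dots> \<le> infsum f {xs. length xs = length L - 1}"
  proof (rule finite_sum_le_infsum[OF sm])
    show "finite (dl L ` ?S)" using fin by simp
    show "dl L ` ?S \<subseteq> {xs. length xs = length L - 1}" by (auto simp: dl_len)
  qed (rule fnn)
  finally show "(\<Sum>j\<in>?S. G j) \<le> infsum f {xs. length xs = length L - 1}" .
qed


lemma cum_tail:
  fixes f :: "int list \<Rightarrow> real"
  assumes A: "set L = A" "L \<noteq> []" "finite A"
    and G: "\<And>j. G j = f (dl L j)" and fnn: "\<And>xs. 0 \<le> f xs"
    and sm: "f summable_on {xs. length xs = length L - 1}"
  shows "\<forall>\<epsilon>>0. \<exists>b0. \<forall>b\<ge>b0. RS A G (far A b) \<epsilon>"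
proof (intro allI impI)
  fix \<epsilon> :: real assume e: "\<epsilon> > 0"
  let ?X = "{xs::int list. length xs = length L - 1}"
  have "\<exists>F0. finite F0 \<and> F0 \<subseteq> ?X \<and> (\<forall>F. finite F \<and> F \<subseteq> ?X - F0 \<longrightarrow> sum f F \<le> \<epsilon>)"
    by (rule summable_tail[OF sm fnn e])
  then obtain F0 where F0a: "finite F0 \<and> F0 \<subseteq> ?X \<and> (\<forall>F. finite F \<and> F \<subseteq> ?X - F0 \<longrightarrow> sum f F \<le> \<epsilon>)"
    by (elim exE)
  have F0: "finite F0" "F0 \<subseteq> ?X" "\<And>F. finite F \<Longrightarrow> F \<subseteq> ?X - F0 \<Longrightarrow> sum f F \<le> \<epsilon>"
    using F0a by simp_all
  define R where "R = Max (insert 0 (abs ` (\<Union>xs\<in>F0. set xs)))"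
  have Rge: "\<bar>e'\<bar> \<le> R" if "xs \<in> F0" "e' \<in> set xs" for xs e'
  proof -
    have "\<bar>e'\<bar> \<in> insert 0 (abs ` (\<Union>xs\<in>F0. set xs))" using that by blast
    moreover have "finite (insert 0 (abs ` (\<Union>xs\<in>F0. set xs)))" using F0(1) by simp
    ultimately show ?thesis unfolding R_def by (rule Max_ge[rotated])
  qed
  have R0: "0 \<le> R" unfolding R_def using F0(1) by (intro Max_ge) simp_all
  show "\<exists>b0. \<forall>b\<ge>b0. RS A G (far A b) \<epsilon>"
  proof (intro exI allI impI)
    fix b :: real assume b: "2 * real_of_int R \<le> b"
    show "RS A G (far A b) \<epsilon>"
      unfolding RS_def
    proof (intro conjI allI impI)
      show "0 \<le> \<epsilon>" using e by simp
      fix p c r assume r: "r \<in> A"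
      let ?S = "{j\<in>Cf A p. j r = c \<and> far A b j}"
      have fin: "finite ?S" using finite_Cf[OF A(3)] by auto
      have L: "L = hd L # tl L" using A(2) by simp
      have setL: "A = insert (hd L) (set (tl L))"
  proof -
    have "set L = insert (hd L) (set (tl L))" using A(2) by (cases L) auto
    then show ?thesis using A(1) by simp
  qed
      have notF0: "dl L j \<notin> F0" if j: "j \<in> ?S" for j
      proof
        assume inF: "dl L j \<in> F0"
        have small: "\<bar>real (j x) - real (j (hd L))\<bar> \<le> b / 2" if x: "x \<in> A" for x
        proof (cases "x = hd L")
          case False
          then have "x \<in> set (tl L)" using x setL by auto
          then have "int (j x) - int (j (hd L)) \<in> set (dl L j)" unfolding dl_def by auto
          from Rge[OF inF this] have "\<bar>int (j x) - int (j (hd L))\<bar> \<le> R" .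
          then have "real_of_int \<bar>int (j x) - int (j (hd L))\<bar> \<le> real_of_int R"
            by (simp only: of_int_le_iff)
          moreover have "real_of_int \<bar>int (j x) - int (j (hd L))\<bar> = \<bar>real (j x) - real (j (hd L))\<bar>"
            by simp
          ultimately have "\<bar>real (j x) - real (j (hd L))\<bar> \<le> real_of_int R" by simp
          then show ?thesis using b by linarith
        qed (use b R0 in simp)
        from j obtain x y where xy: "x \<in> A" "y \<in> A" "b < \<bar>real (j x) - real (j y)\<bar>"
          unfolding far_def by auto
        from small[OF xy(1)] small[OF xy(2)] xy(3) show False by linarith
      qed
      have "(\<Sum>j\<in>?S. G j) = (\<Sum>j\<in>?S. f (dl L j))" by (intro sum.cong refl G)
      also have "\<dots> = sum f (dl L ` ?S)"
        by (rule sum.reindex[OF dl_inj[OF A(1,2) r], symmetric, unfolded comp_def])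
      also have "\<dots> \<le> \<epsilon>"
      proof (rule F0(3))
        show "finite (dl L ` ?S)" using fin by simp
        show "dl L ` ?S \<subseteq> ?X - F0" using notF0 by (auto simp: dl_len)
      qed
      finally show "(\<Sum>j\<in>?S. G j) \<le> \<epsilon>" .
    qed
  qed
qed




lemma sum_list_take_le: "sum_list (take a (ks::nat list)) \<le> sum_list ks"
proof -
  have "sum_list ks = sum_list (take a ks) + sum_list (drop a ks)"
    by (metis append_take_drop_id sum_list_append)
  then show ?thesis by simp
qed

lemma Kidx_Suc: "a < length ks \<Longrightarrow> Kidx ks (Suc a) = Kidx ks a + 2 * ks ! a"
  unfolding Kidx_def by (simp add: take_Suc_conv_app_nth)

lemma Pi1_sub:
  assumes pos: "\<forall>x\<in>set ks. 1 \<le> x" and B: "B \<in> Pi1 ks"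
  shows "B \<subseteq> {1..2 * sum_list ks} \<and> B \<noteq> {}"
proof -
  from B obtain \<alpha> where al: "\<alpha> \<in> {1..length ks}" and
    B': "B \<in> {{Kidx ks (\<alpha> - 1) + 2 * \<nu>, Kidx ks (\<alpha> - 1) + 2 * \<nu> + 1} | \<nu>.
          1 \<le> \<nu> \<and> \<nu> \<le> ks ! (\<alpha> - 1) - 1} \<union> {{Kidx ks \<alpha>, Kidx ks (\<alpha> - 1) + 1}}"
    unfolding Pi1_def by blast
  define a where "a = \<alpha> - 1"
  have a: "a < length ks" "\<alpha> = Suc a" using al unfolding a_def by auto
  have ka: "1 \<le> ks ! a" using pos a(1) by auto
  have K: "Kidx ks \<alpha> = Kidx ks a + 2 * ks ! a" using Kidx_Suc[OF a(1)] a(2) by simp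
  have Kle: "Kidx ks \<alpha> \<le> 2 * sum_list ks" unfolding Kidx_def using sum_list_take_le by simp
  show ?thesis
  proof (cases "B = {Kidx ks \<alpha>, Kidx ks (\<alpha> - 1) + 1}")
    case True
    then show ?thesis using K Kle ka unfolding a_def by auto
  next
    case False
    then obtain \<nu> where nu: "B = {Kidx ks a + 2 * \<nu>, Kidx ks a + 2 * \<nu> + 1}" "1 \<le> \<nu>" "\<nu> \<le> ks ! a - 1"
      using B' unfolding a_def by blast
    then show ?thesis using K Kle ka by auto
  qed
qed

lemma conn_from_card:
  assumes "card (S // R) = 1" "(\<And>x. (x, x) \<in> R)"
    and x: "x \<in> S" and y: "y \<in> S"
  shows "(x, y) \<in> R"
proof -
  obtain C where C: "S // R = {C}" using assms(1) card_1_singletonE by blast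
  have "R `` {x} \<in> S // R" "R `` {y} \<in> S // R" using x y by (auto intro: quotientI)
  then have "R `` {x} = R `` {y}" using C by auto
  moreover have "y \<in> R `` {y}" using assms(2) by auto
  ultimately show ?thesis by auto
qed


lemma RS_mono_F: "RS W F P K \<Longrightarrow> (\<And>j. F' j \<le> F j) \<Longrightarrow> RS W F' P K"
  unfolding RS_def by (meson order_trans sum_mono)

definition cabs :: "'a measure \<Rightarrow> (int \<Rightarrow> 'a \<Rightarrow> real) \<Rightarrow> nat set \<Rightarrow> (nat \<Rightarrow> nat) \<Rightarrow> real" where
  "cabs M Z A j = \<bar>cumulant M (map (\<lambda>i. Z (int (j i))) (sorted_list_of_set A))\<bar>"

lemma cabs_dl:
  fixes M :: "'a measure" and Z :: "int \<Rightarrow> 'a \<Rightarrow> real"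
  assumes meas: "\<And>j. Z j \<in> borel_measurable M"
    and st: "\<And>(h::int) (js::int list).
           distr M (PiM {..<length js} (\<lambda>_. borel)) (\<lambda>x. \<lambda>i\<in>{..<length js}. Z (js ! i + h) x)
         = distr M (PiM {..<length js} (\<lambda>_. borel)) (\<lambda>x. \<lambda>i\<in>{..<length js}. Z (js ! i) x)"
    and L: "L = sorted_list_of_set A" "L \<noteq> []"
  shows "cabs M Z A j = \<bar>cumulant M (Z 0 # map Z (dl L j))\<bar>"
proof -
  define h where "h = int (j (hd L))"
  have LL: "L = hd L # tl L" using L(2) by simp
  have "map (\<lambda>i. Z (int (j i))) L = map (\<lambda>w. Z (w + h)) (0 # dl L j)"
    unfolding dl_def h_def by (subst LL) simp
  then have "cumulant M (map (\<lambda>i. Z (int (j i))) L) = cumulant M (map Z (0 # dl L j))"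
  proof -
    have "cumulant M (map (\<lambda>w. Z (w + h)) (0 # dl L j)) = cumulant M (map Z (0 # dl L j))"
      by (rule cumulant_shift[OF meas st])
    then show ?thesis using \<open>map (\<lambda>i. Z (int (j i))) L = map (\<lambda>w. Z (w + h)) (0 # dl L j)\<close>
      by (simp only:)
  qed
  then show ?thesis unfolding cabs_def L(1)[symmetric] by simp
qed

lemma FpC_lemma:
  assumes finE: "finite E" and E: "E = P1 \<union> Pp" and finA: "\<And>A. A \<in> E \<Longrightarrow> finite A"
    and jm: "measurable_wrt P1 j"
  shows "(\<Prod>A\<in>E. (if A \<in> P1 then ind A (restrict j A) else 1) * (if A \<in> Pp then cabs M Z A (restrict j A) else 1))
         = \<bar>CPi M Z Pp j\<bar>"
proof -
    have e1: "(\<Prod>A\<in>E. (if A \<in> P1 then ind A (restrict j A) else 1) * (if A \<in> Pp then cabs M Z A (restrict j A) else 1))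
       = (\<Prod>A\<in>E. if A \<in> P1 then ind A (restrict j A) else 1) *
                 (\<Prod>A\<in>E. if A \<in> Pp then cabs M Z A (restrict j A) else 1)"
      by (rule prod.distrib)
    have e2: "(\<Prod>A\<in>E. if A \<in> P1 then ind A (restrict j A) else 1) = 1"
    proof (intro prod.neutral ballI)
      fix A assume "A \<in> E"
      show "(if A \<in> P1 then ind A (restrict j A) else 1) = 1"
      proof (cases "A \<in> P1")
        case True
        then have "\<forall>x\<in>A. \<forall>y\<in>A. j x = j y" using jm unfolding measurable_wrt_def by blast
        then have "\<forall>x\<in>A. \<forall>y\<in>A. restrict j A x = restrict j A y"
          by (metis restrict_apply')
        then have "ind A (restrict j A) = 1" unfolding ind_def by (rule if_P)
        then show ?thesis using True by simp
      qed simp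
    qed
    have e3: "(\<Prod>A\<in>E. if A \<in> Pp then cabs M Z A (restrict j A) else 1) = (\<Prod>A\<in>{A\<in>E. A \<in> Pp}. cabs M Z A (restrict j A))"
      by (rule prod.inter_filter[OF finE, symmetric])
    have e4: "{A\<in>E. A \<in> Pp} = Pp" unfolding E by auto
    have e5: "(\<Prod>A\<in>Pp. cabs M Z A (restrict j A)) = (\<Prod>A\<in>Pp. cabs M Z A j)"
    proof (intro prod.cong refl)
      fix A assume A: "A \<in> Pp"
      then have fA: "finite A" using finA unfolding E by blast
      have "map (\<lambda>i. Z (int (restrict j A i))) (sorted_list_of_set A) = map (\<lambda>i. Z (int (j i))) (sorted_list_of_set A)"
      proof (rule map_cong[OF refl])
        fix x assume "x \<in> set (sorted_list_of_set A)"
        then have "x \<in> A" using fA by simp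
        then show "Z (int (restrict j A x)) = Z (int (j x))" by simp
      qed
      then show "cabs M Z A (restrict j A) = cabs M Z A j" unfolding cabs_def
        by (rule arg_cong[where f="\<lambda>l. \<bar>cumulant M l\<bar>"])
    qed
    have e6: "(\<Prod>A\<in>Pp. cabs M Z A j) = \<bar>CPi M Z Pp j\<bar>" unfolding CPi_def cabs_def by (simp add: abs_prod)
    show ?thesis unfolding e1 e2 e3 e4 e5 e6 by simp
qed

theorem proposition6p3:
  fixes M :: "'a measure" and Z :: "int \<Rightarrow> 'a \<Rightarrow> real"
    and b :: "nat \<Rightarrow> real" and n :: "nat \<Rightarrow> nat"
    and ks :: "nat list" and Pp :: "nat set set"
  assumes "prob_space M"
    and "\<And>j. Z j \<in> borel_measurable M"
    and "\<And>j m. integrable M (\<lambda>x. \<bar>Z j x\<bar> ^ m)"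
    and "integral\<^sup>L M (Z 0) = 0"
    and "\<And>(h::int) (js::int list).
           distr M (PiM {..<length js} (\<lambda>_. borel)) (\<lambda>x. \<lambda>i\<in>{..<length js}. Z (js ! i + h) x)
         = distr M (PiM {..<length js} (\<lambda>_. borel)) (\<lambda>x. \<lambda>i\<in>{..<length js}. Z (js ! i) x)"
    and "\<And>r. r \<ge> 1 \<Longrightarrow>
           (\<lambda>js. \<bar>cumulant M (Z 0 # map Z js)\<bar>) summable_on {js :: int list. length js = r}"
    and "\<And>p. p \<ge> 1 \<Longrightarrow> 0 < b p \<and> b p \<le> real p \<and> 0 < n p"
    and "filterlim b at_top at_top"
    and "filterlim n at_top at_top"
    and "(\<lambda>p. b p / real (n p)) \<longlonglongrightarrow> 0"
    and "ks \<noteq> []" and "\<forall>x\<in>set ks. 1 \<le> x"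
    and "Pp \<in> Part2 (2 * sum_list ks)"
    and "card (part_join {1..2 * sum_list ks}
                (part_join {1..2 * sum_list ks} (Pi0 ks) (Pi1 ks)) Pp) = 1"
    and "card (part_join {1..2 * sum_list ks} (Pi1 ks) Pp) = 1"
  shows "(\<lambda>p. \<Sum>j\<in>{j \<in> words p (2 * sum_list ks). measurable_wrt (Pi1 ks) j}.
             (1 - Bword (b p) (sum_list ks) j) * CPi M Z Pp j) \<in> o(\<lambda>p. real p)"
  proof -
  note meas = assms(2) and st = assms(5) and summ = assms(6)
  define k where "k = sum_list ks"
  define S where "S = {1..2 * k}"
  define E where "E = Pi1 ks \<union> Pp"
  define g where "g = (\<lambda>A j. (if A \<in> Pi1 ks then ind A j else 1) * (if A \<in> Pp then cabs M Z A j else 1))"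
  have k1: "1 \<le> k" unfolding k_def using assms(11,12)
    by (metis elem_le_sum_list in_set_conv_nth length_greater_0_conv order_trans)
  have finS: "finite S" and SNE: "S \<noteq> {}" and oneS: "1 \<in> S" unfolding S_def using k1 by auto
  have part: "partition_on S Pp" using assms(13) unfolding Part2_def Part_def S_def k_def by auto
  have Pp2: "\<And>A. A \<in> Pp \<Longrightarrow> 2 \<le> card A" using assms(13) unfolding Part2_def by auto
  have PpS: "\<And>A. A \<in> Pp \<Longrightarrow> A \<subseteq> S \<and> A \<noteq> {}" using part unfolding partition_on_def by auto
  have Pi1S: "\<And>A. A \<in> Pi1 ks \<Longrightarrow> A \<subseteq> S \<and> A \<noteq> {}"
    using Pi1_sub[OF assms(12)] unfolding S_def k_def by blast
  have ES: "\<forall>A\<in>E. A \<noteq> {} \<and> A \<subseteq> S" using PpS Pi1S unfolding E_def by blast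
  have finE: "finite E"
    by (rule finite_subset[of E "Pow S"]) (use ES finS in auto)
  have finA: "\<And>A. A \<in> E \<Longrightarrow> finite A" using ES finS finite_subset by blast
  have cov: "\<forall>x\<in>S. \<exists>A\<in>E. x \<in> A" using part unfolding partition_on_def E_def by auto
  have conn: "\<forall>x\<in>S. \<forall>y\<in>S. (x, y) \<in> {(x, y). \<exists>A\<in>E. x \<in> A \<and> y \<in> A}\<^sup>*"
  proof (intro ballI)
    fix x y assume "x \<in> S" "y \<in> S"
    then show "(x, y) \<in> {(x, y). \<exists>A\<in>E. x \<in> A \<and> y \<in> A}\<^sup>*"
      using conn_from_card[OF assms(15)[unfolded part_join_def]] unfolding S_def E_def k_def
      by blast
  qed
  have bt: "built E S E" by (rule connected_built[OF finS SNE finE ES cov conn])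
  have gnn: "\<And>A j. 0 \<le> g A j" unfolding g_def ind_def cabs_def by auto
  have HK: "\<exists>K. RS A (g A) (\<lambda>_. True) K" and HT: "\<forall>\<epsilon>>0. \<exists>B. \<forall>b\<ge>B. RS A (g A) (far A b) \<epsilon>"
    if A: "A \<in> E" for A
  proof -
    have fA: "finite A" using finA A .
    have "(\<exists>K. RS A (g A) (\<lambda>_. True) K) \<and> (\<forall>\<epsilon>>0. \<exists>B. \<forall>b\<ge>B. RS A (g A) (far A b) \<epsilon>)"
    proof (cases "A \<in> Pp")
      case True
      define L where "L = sorted_list_of_set A"
      have LA: "set L = A" unfolding L_def using fA by simp
      have lenL: "length L = card A" unfolding L_def by simp
      have LNE: "L \<noteq> []" using Pp2[OF True] lenL by auto
      define f where "f = (\<lambda>xs. \<bar>cumulant M (Z 0 # map Z xs)\<bar>)"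
      have fnn: "\<And>xs. 0 \<le> f xs" unfolding f_def by simp
      have sm: "f summable_on {xs. length xs = length L - 1}"
        unfolding f_def using summ[of "length L - 1"] Pp2[OF True] lenL by simp
      have G: "\<And>j. cabs M Z A j = f (dl L j)"
        unfolding f_def by (rule cabs_dl[OF meas st L_def LNE])
      have le: "\<And>j. g A j \<le> cabs M Z A j"
        unfolding g_def ind_def using True by (auto simp: cabs_def)
      show ?thesis
        using RS_mono_F[OF cum_RS[OF LA LNE fA G fnn sm] le]
          RS_mono_F[OF _ le] cum_tail[OF LA LNE fA G fnn sm] by meson
    next
      case False
      then have "A \<in> Pi1 ks" using A unfolding E_def by blast
      then have eq: "g A = ind A" using False unfolding g_def by auto
      show ?thesis unfolding eq using ind_RS[OF fA] ind_tail[OF fA] by blast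
    qed
    then show "\<exists>K. RS A (g A) (\<lambda>_. True) K" "\<forall>\<epsilon>>0. \<exists>B. \<forall>b\<ge>B. RS A (g A) (far A b) \<epsilon>"
      by auto
  qed
  define Fp where "Fp = (\<lambda>j. \<Prod>A\<in>E. g A (restrict j A))"
  have Fpnn: "\<And>j. 0 \<le> Fp j" unfolding Fp_def by (intro prod_nonneg gnn)
  have tail: "\<forall>\<epsilon>>0. \<exists>B. \<forall>b\<ge>B. RS S Fp (far S b) \<epsilon>"
    using built_bound[OF finA gnn HK HT bt] unfolding Fp_def by blast
  have FpC: "Fp j = \<bar>CPi M Z Pp j\<bar>" if jm: "measurable_wrt (Pi1 ks) j" for j
    unfolding Fp_def g_def by (rule FpC_lemma[OF finE E_def finA jm])
  have termb: "\<bar>(1 - Bword bb k j) * CPi M Z Pp j\<bar> \<le> (if far S bb j then Fp j else 0)"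
    if jw: "j \<in> Cf S p" and jm: "measurable_wrt (Pi1 ks) j" for j p bb
  proof (cases "\<forall>\<alpha>\<in>{1..k}. band bb (j (2 * \<alpha> - 1)) (j (2 * \<alpha>)) = 1")
    case True
    then have "Bword bb k j = 1" unfolding Bword_def by (intro prod.neutral) auto
    then show ?thesis using Fpnn by simp
  next
    case False
    then obtain \<alpha> where al: "\<alpha> \<in> {1..k}" "band bb (j (2 * \<alpha> - 1)) (j (2 * \<alpha>)) \<noteq> 1" by blast
    then have b0: "band bb (j (2 * \<alpha> - 1)) (j (2 * \<alpha>)) = 0" unfolding band_def by (auto split: if_splits)
    have "Bword bb k j = 0" unfolding Bword_def using al(1) b0 by (intro prod_zero) auto
    moreover have "far S bb j"
      unfolding far_def
    proof (intro bexI)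
      show "bb < \<bar>real (j (2 * \<alpha> - 1)) - real (j (2 * \<alpha>))\<bar>"
        using al(2) unfolding band_def by (auto split: if_splits)
      show "2 * \<alpha> - 1 \<in> S" "2 * \<alpha> \<in> S" using al(1) unfolding S_def by auto
    qed
    ultimately show ?thesis using FpC[OF jm] by simp
  qed
  have kk: "sum_list ks = k" unfolding k_def ..
  have wS: "words p (2 * k) = Cf S p" for p unfolding words_def Cf_def S_def ..
  show ?thesis
    unfolding kk wS
  proof (rule landau_o.smallI)
    fix c :: real assume c: "c > 0"
    obtain B where B: "\<And>bb. bb \<ge> B \<Longrightarrow> RS S Fp (far S bb) c" using tail c by blast
    have ev: "eventually (\<lambda>p. B \<le> b p) sequentially" using assms(8) by (simp add: filterlim_at_top)
    show "eventually (\<lambda>p. norm (\<Sum>j\<in>{j \<in> Cf S p. measurable_wrt (Pi1 ks) j}.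
             (1 - Bword (b p) k j) * CPi M Z Pp j) \<le> c * norm (real p)) sequentially"
      using ev
    proof eventually_elim
      case (elim p)
      have R: "RS S Fp (far S (b p)) c" using B elim by blast
      let ?J = "{j \<in> Cf S p. measurable_wrt (Pi1 ks) j}"
      let ?S' = "{j \<in> Cf S p. far S (b p) j}"
      have finC: "finite (Cf S p)" using finite_Cf[OF finS] .
      have "\<bar>\<Sum>j\<in>?J. (1 - Bword (b p) k j) * CPi M Z Pp j\<bar> \<le> (\<Sum>j\<in>?J. \<bar>(1 - Bword (b p) k j) * CPi M Z Pp j\<bar>)"
        by (rule sum_abs)
      also have "\<dots> \<le> (\<Sum>j\<in>?J. if far S (b p) j then Fp j else 0)"
        by (intro sum_mono termb) auto
      also have "\<dots> \<le> (\<Sum>j\<in>Cf S p. if far S (b p) j then Fp j else 0)"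
        by (rule sum_mono2) (use finC Fpnn in auto)
      also have "\<dots> = (\<Sum>j\<in>?S'. Fp j)"
        by (rule sum.inter_filter[OF finC, symmetric])
      also have "\<dots> = (\<Sum>c'\<in>{1..p}. \<Sum>j\<in>{x. x \<in> ?S' \<and> x 1 = c'}. Fp j)"
      proof (rule sum.group[symmetric])
        show "finite ?S'" using finC by simp
        show "(\<lambda>x. x 1) ` ?S' \<subseteq> {1..p}" using oneS by (auto simp: Cf_def PiE_def Pi_def)
      qed simp
      also have "\<dots> \<le> (\<Sum>c'\<in>{1..p}. c)"
      proof (intro sum_mono)
        fix c' assume "c' \<in> {1..p}"
        have "{x. x \<in> ?S' \<and> x 1 = c'} = {j\<in>Cf S p. j 1 = c' \<and> far S (b p) j}" by auto
        then show "(\<Sum>j\<in>{x. x \<in> ?S' \<and> x 1 = c'}. Fp j) \<le> c" using RSD[OF R oneS] by simp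
      qed
      also have "\<dots> = c * real p" by simp
      finally show ?case by simp
    qed
  qed
qed


end
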